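(* Let $\alpha\in(0,1)\cup(1,\infty)$, $\beta=\alpha/(\alpha-1)$, and consider the $\alpha$-loss $\ell_\alpha(\mathrm{h},(x,y))=\beta\big(1-\mathrm{h}(y|x)^{1/\beta}\big)$, with score $L(\mathrm{q},y)=\beta(1-\mathrm{q}(y)^{1/\beta})$. Then, for $\mathbf{a},\mathbf{b}\in\mathbb{R}^m$, the problem $\mathscr{P}_{\ell_\alpha}^{\mathbf{a},\mathbf{b}}$ is equivalent to $$\mathscr{P}_{\alpha}^{\mathbf{a},\mathbf{b}}:\ \min_{\boldsymbol{\mu},\boldsymbol{\eta},\nu}\ \tfrac{1}{2}(\mathbf{b}-\mathbf{a})^{\mathrm{T}}\boldsymbol{\eta}-\tfrac{1}{2}(\mathbf{b}+\mathbf{a})^{\mathrm{T}}\boldsymbol{\mu}-\nu\ \text{ s.t. }\sum_{y\in\mathcal{Y}}\Big(\frac{\Phi(x,y)^{\mathrm{T}}\boldsymbol{\mu}+\nu}{\beta}+1\Big)_+^{\beta}\leq 1\ \forall x\in\mathcal{X},\ \boldsymbol{\eta}+\boldsymbol{\mu}\succeq\mathbf{0},\ \boldsymbol{\eta}-\boldsymbol{\mu}\succeq\mathbf{0}.$$ In addition, for a solution $\boldsymbol{\mu}^*,\boldsymbol{\eta}^*,\nu^*$ of $\mathscr{P}_{\alpha}^{\mathbf{a},\mathbf{b}}$, the condition $\ell_\alpha(\mathrm{h},(x,y))+\Phi(x,y)^{\mathrm{T}}\boldsymbol{\mu}^*+\nu^*\leq 0$ for all $x\in\mathcal{X},y\in\mathcal{Y}$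 (which makes $\mathrm{h}$ an $\ell_\alpha$-MRC for $\mathcal{U}^{\mathbf{a},\mathbf{b}}$) becomes $$\mathrm{h}(y|x)\geq \Big(\frac{\Phi(x,y)^{\mathrm{T}}\boldsymbol{\mu}^*+\nu^*}{\beta}+1\Big)_+^{\beta}\quad\forall x\in\mathcal{X},y\in\mathcal{Y}.$$
   Context: Let $\mathcal{X},\mathcal{Y}$ be finite nonempty sets, $\mathcal{Y}=\{1,\dots,|\mathcal{Y}|\}$; $\Delta(\mathcal{Y})$ is the set of probability distributions on $\mathcal{Y}$. A classification rule $\mathrm{h}$ assigns to each $x$ a distribution $\mathrm{h}(\cdot|x)\in\Delta(\mathcal{Y})$. For a score function $L$ with loss $\ell(\mathrm{h},(x,y))=L(\mathrm{h}(\cdot|x),y)$: $\Phi:\mathcal{X}\times\mathcal{Y}\to\mathbb{R}^m$ is a feature mapping, $\boldsymbol{\Phi}(x,\cdot)$ is the $|\mathcal{Y}|\times m$ matrix with rows $\Phi(x,y)^{\mathrm{T}}$, $\mathbf{1}$ the all-ones vector, $\preceq,\succeq$ componentwise, $\mathcal{L}=\{\mathbf{c}\in\mathbb{R}^{|\mathcal{Y}|}:\exists\,\mathrm{q}\in\Delta(\mathcal{Y}),\ \mathbf{c}+(L(\mathrm{q},y))_y\preceq\mathbf{0}\}$, and $\mathscr{P}_{\ell}^{\mathbf{a},\mathbf{b}}$ is $\min_{\boldsymbol{\mu},\boldsymbol{\eta},\nu}\tfrac12(\mathbf{b}-\mathbf{a})^{\mathrm{T}}\boldsymbol{\eta}-\tfrac12(\mathbf{b}+\mathbf{a})^{\mathrm{T}}\boldsymbol{\mu}-\nu$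 s.t. $\boldsymbol{\Phi}(x,\cdot)\boldsymbol{\mu}+\nu\mathbf{1}\in\mathcal{L}$ $\forall x$, $\boldsymbol{\eta}\pm\boldsymbol{\mu}\succeq\mathbf{0}$. $\mathcal{U}^{\mathbf{a},\mathbf{b}}=\{\mathrm{p}\in\Delta(\mathcal{X}\times\mathcal{Y}):\mathbf{a}\preceq\mathbb{E}_{\mathrm{p}}\{\Phi\}\preceq\mathbf{b}\}$; an $\ell$-MRC for $\mathcal{U}$ minimizes $\max_{\mathrm{p}\in\mathcal{U}}\sum_{x,y}\mathrm{p}(x,y)\ell(\mathrm{h},(x,y))$ over all classification rules. In expressions $(\cdot)_+^\beta$ the positive part is taken before the power. *)

theory Defs
  imports "HOL-Analysis.Analysis" "HOL-Library.Extended_Real"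
begin

definition Delta :: "('y::finite \<Rightarrow> real) set" where
  "Delta = {q. (\<forall>y. 0 \<le> q y) \<and> (\<Sum>y\<in>UNIV. q y) = 1}"

definition classif_rule :: "('x \<Rightarrow> 'y::finite \<Rightarrow> real) \<Rightarrow> bool" where
  "classif_rule h \<longleftrightarrow> (\<forall>x. h x \<in> Delta)"

text \<open>Extended power t^p for t \<ge> 0, with the conventions 0^p = 0 for p > 0,
  0^p = +\<infinity> for p < 0, 0^0 = 1.\<close>
definition epow :: "real \<Rightarrow> real \<Rightarrow> ereal" where
  "epow t p = (if 0 < t then ereal (t powr p)
               else if 0 < p then 0 else if p = 0 then 1 else \<infinity>)"

definition Lset :: "(('y::finite \<Rightarrow> real) \<Rightarrow> 'y \<Rightarrow> ereal) \<Rightarrow> ('y \<Rightarrow> real) set" where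
  "Lset L = {c. \<exists>q\<in>Delta. \<forall>y. ereal (c y) + L q y \<le> 0}"

definition mrc_obj :: "real^'m \<Rightarrow> real^'m \<Rightarrow> ((real^'m) \<times> (real^'m) \<times> real) \<Rightarrow> real" where
  "mrc_obj a b s = (case s of (\<mu>, \<eta>, \<nu>) \<Rightarrow>
      (1/2) * ((b - a) \<bullet> \<eta>) - (1/2) * ((b + a) \<bullet> \<mu>) - \<nu>)"

definition P_feasible :: "(('y::finite \<Rightarrow> real) \<Rightarrow> 'y \<Rightarrow> ereal) \<Rightarrow> ('x \<Rightarrow> 'y \<Rightarrow> real^'m)
      \<Rightarrow> ((real^'m) \<times> (real^'m) \<times> real) set" where
  "P_feasible L \<Phi> = {(\<mu>, \<eta>, \<nu>).
      (\<forall>x. (\<lambda>y. \<Phi> x y \<bullet> \<mu> + \<nu>) \<in> Lset L) \<and>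
      (\<forall>i. 0 \<le> \<eta>$i + \<mu>$i \<and> 0 \<le> \<eta>$i - \<mu>$i)}"

definition Palpha_feasible :: "real \<Rightarrow> ('x \<Rightarrow> 'y::finite \<Rightarrow> real^'m)
      \<Rightarrow> ((real^'m) \<times> (real^'m) \<times> real) set" where
  "Palpha_feasible \<beta> \<Phi> = {(\<mu>, \<eta>, \<nu>).
      (\<forall>x. (\<Sum>y\<in>UNIV. epow (max 0 ((\<Phi> x y \<bullet> \<mu> + \<nu>) / \<beta> + 1)) \<beta>) \<le> 1) \<and>
      (\<forall>i. 0 \<le> \<eta>$i + \<mu>$i \<and> 0 \<le> \<eta>$i - \<mu>$i)}"

definition is_solution :: "('s \<Rightarrow> real) \<Rightarrow> 's set \<Rightarrow> 's \<Rightarrow> bool" where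
  "is_solution obj F s \<longleftrightarrow> s \<in> F \<and> (\<forall>t\<in>F. obj s \<le> obj t)"

definition alpha_score :: "real \<Rightarrow> ('y \<Rightarrow> real) \<Rightarrow> 'y \<Rightarrow> ereal" where
  "alpha_score \<beta> q y = ereal \<beta> * (1 - epow (q y) (1 / \<beta>))"

definition alpha_loss :: "real \<Rightarrow> ('x \<Rightarrow> 'y \<Rightarrow> real) \<Rightarrow> 'x \<Rightarrow> 'y \<Rightarrow> ereal" where
  "alpha_loss \<beta> h x y = alpha_score \<beta> (h x) y"

end

theory Submission imports Defs begin
lemma powr_le_iff_pos: "0 \<le> u \<Longrightarrow> 0 \<le> m \<Longrightarrow> 0 < (p::real) \<Longrightarrow> (m powr p \<le> u powr p) = (m \<le> u)"
  by (meson powr_le_cancel_iff le_less powr_mono2 not_le powr_less_mono2)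
lemma powr_le_iff_neg: "0 < u \<Longrightarrow> 0 < m \<Longrightarrow> (p::real) < 0 \<Longrightarrow> (m powr p \<le> u powr p) = (u \<le> m)"
proof -
  assume a: "0 < u" "0 < m" "p < 0"
  have "m powr p = (inverse m) powr (-p)" "u powr p = (inverse u) powr (-p)"
    using a by (simp_all add: powr_minus_divide powr_divide field_simps)
  moreover have "((inverse m) powr (-p) \<le> (inverse u) powr (-p)) = (inverse m \<le> inverse u)"
    using a by (intro powr_le_iff_pos) auto
  ultimately show ?thesis using a by simp
qed
lemma key:
  fixes \<beta> t c :: real
  assumes b: "\<beta> > 1 \<or> \<beta> < 0" and t: "0 \<le> t"
  shows "(ereal c + ereal \<beta> * (1 - epow t (1/\<beta>)) \<le> 0) \<longleftrightarrow> (ereal t \<ge> epow (max 0 (c/\<beta>+1)) \<beta>)"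
proof -
  define m where "m = max 0 (c/\<beta>+1)"
  have m0: "m \<ge> 0" by (simp add: m_def)
  have "(ereal c + ereal \<beta> * (1 - epow t (1/\<beta>)) \<le> 0) \<longleftrightarrow> (ereal t \<ge> epow m \<beta>)"
  proof (cases "\<beta> > 1")
    case True
    show ?thesis
    proof (cases "t = 0")
      case True
      have "epow t (1/\<beta>) = 0" using True \<open>\<beta> > 1\<close> by (simp add: epow_def)
      then have L: "(ereal c + ereal \<beta> * (1 - epow t (1/\<beta>)) \<le> 0) = (c + \<beta> \<le> 0)" by simp
      have "(c + \<beta> \<le> 0) = (c/\<beta>+1 \<le> 0)" using \<open>\<beta> > 1\<close> by (simp add: field_simps)
      moreover have "(ereal t \<ge> epow m \<beta>) = (m = 0)" using True \<open>\<beta> > 1\<close> m0 by (auto simp: epow_def)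
      ultimately show ?thesis using L m_def by auto
    next
      case False
      then have tp: "t > 0" using t by simp
      define u where "u = t powr (1/\<beta>)"
      have up: "u > 0" using tp by (simp add: u_def)
      have tu: "t = u powr \<beta>" using tp \<open>\<beta> > 1\<close> by (simp add: u_def powr_powr)
      have "epow t (1/\<beta>) = ereal u" using tp by (simp add: epow_def u_def)
      moreover have "ereal c + ereal \<beta> * (1 - ereal u) = ereal (c + \<beta> * (1 - u))"
        by (simp only: one_ereal_def ereal_minus(1) times_ereal.simps(1) plus_ereal.simps(1))
      ultimately have L: "(ereal c + ereal \<beta> * (1 - epow t (1/\<beta>)) \<le> 0) = (c + \<beta> * (1 - u) \<le> 0)" by simp
      have L2: "(c + \<beta> * (1 - u) \<le> 0) = (c/\<beta>+1 \<le> u)" using \<open>\<beta> > 1\<close> by (simp add: field_simps)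
      show ?thesis
      proof (cases "m > 0")
        case True
        have "(ereal t \<ge> epow m \<beta>) = (m powr \<beta> \<le> u powr \<beta>)" using True tu by (simp add: epow_def)
        also have "\<dots> = (m \<le> u)" using up m0 \<open>\<beta> > 1\<close> by (intro powr_le_iff_pos) auto
        finally show ?thesis using L L2 True m_def by auto
      next
        case False
        then have "m = 0" using m0 by simp
        then show ?thesis using L L2 up \<open>\<beta> > 1\<close> m_def tp by (auto simp: epow_def)
      qed
    qed
  next
    case False
    then have bn: "\<beta> < 0" using b by simp
    show ?thesis
    proof (cases "t = 0")
      case True
      have "epow t (1/\<beta>) = \<infinity>" using True bn by (simp add: epow_def)
      then have "ereal \<beta> * (1 - epow t (1/\<beta>)) = \<infinity>" using bn by (simp add: one_ereal_def)
      then have "ereal c + ereal \<beta> * (1 - epow t (1/\<beta>)) = \<infinity>" by (simp only:) simp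
      then have L: "\<not> (ereal c + ereal \<beta> * (1 - epow t (1/\<beta>)) \<le> 0)" by (simp only:) simp
      have "\<not> (ereal t \<ge> epow m \<beta>)" using True bn m0 by (auto simp: epow_def)
      then show ?thesis using L by simp
    next
      case False
      then have tp: "t > 0" using t by simp
      define u where "u = t powr (1/\<beta>)"
      have up: "u > 0" using tp by (simp add: u_def)
      have tu: "t = u powr \<beta>" using tp bn by (simp add: u_def powr_powr)
      have "epow t (1/\<beta>) = ereal u" using tp by (simp add: epow_def u_def)
      moreover have "ereal c + ereal \<beta> * (1 - ereal u) = ereal (c + \<beta> * (1 - u))"
        by (simp only: one_ereal_def ereal_minus(1) times_ereal.simps(1) plus_ereal.simps(1))
      ultimately have L: "(ereal c + ereal \<beta> * (1 - epow t (1/\<beta>)) \<le> 0) = (c + \<beta> * (1 - u) \<le> 0)" by simp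
      have L2: "(c + \<beta> * (1 - u) \<le> 0) = (u \<le> c/\<beta>+1)" using bn by (simp add: field_simps)
      show ?thesis
      proof (cases "m > 0")
        case True
        have "(ereal t \<ge> epow m \<beta>) = (m powr \<beta> \<le> u powr \<beta>)" using True tu by (simp add: epow_def)
        also have "\<dots> = (u \<le> m)" using up True bn by (intro powr_le_iff_neg) auto
        finally show ?thesis using L L2 True m_def by auto
      next
        case False
        then have "m = 0" using m0 by simp
        then show ?thesis using L L2 up bn m_def tp by (auto simp: epow_def)
      qed
    qed
  qed
  then show ?thesis by (simp add: m_def)
qed
lemma epow_nonneg: "epow t p \<ge> 0" by (simp add: epow_def)

lemma Lset_iff:
  fixes c :: "'y::finite \<Rightarrow> real"
  assumes b: "\<beta> > 1 \<or> \<beta> < 0"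
  shows "c \<in> Lset (alpha_score \<beta>) \<longleftrightarrow> (\<Sum>y\<in>UNIV. epow (max 0 (c y/\<beta>+1)) \<beta>) \<le> 1"
proof -
  define g where "g y = epow (max 0 (c y/\<beta>+1)) \<beta>" for y
  have pt: "(\<forall>y. ereal (c y) + alpha_score \<beta> q y \<le> 0) \<longleftrightarrow> (\<forall>y. ereal (q y) \<ge> g y)"
    if "q \<in> Delta" for q
  proof -
    have "\<forall>y. 0 \<le> q y" using that by (simp add: Delta_def)
    then show ?thesis unfolding alpha_score_def g_def using key[OF b] by blast
  qed
  have "c \<in> Lset (alpha_score \<beta>) \<longleftrightarrow> (\<exists>q\<in>Delta. \<forall>y. ereal (q y) \<ge> g y)"
    unfolding Lset_def using pt by auto
  also have "\<dots> \<longleftrightarrow> sum g UNIV \<le> 1"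
  proof
    assume "\<exists>q\<in>Delta. \<forall>y. ereal (q y) \<ge> g y"
    then obtain q where q: "q \<in> Delta" "\<forall>y. ereal (q y) \<ge> g y" by blast
    have "sum g UNIV \<le> (\<Sum>y\<in>UNIV. ereal (q y))" using q(2) by (intro sum_mono) auto
    also have "\<dots> = ereal (\<Sum>y\<in>UNIV. q y)" by simp
    also have "\<dots> = 1" using q(1) by (simp add: Delta_def)
    finally show "sum g UNIV \<le> 1" .
  next
    assume S: "sum g UNIV \<le> 1"
    have g0: "g y \<ge> 0" for y by (simp add: g_def epow_nonneg)
    have gle: "g y \<le> 1" for y
    proof -
      have "sum g UNIV = g y + sum g (UNIV - {y})" by (simp add: sum.remove)
      moreover have "sum g (UNIV - {y}) \<ge> 0" by (rule sum_nonneg) (simp add: g0)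
      ultimately have "g y \<le> sum g UNIV" by (simp add: add_increasing2)
      then show ?thesis using S by simp
    qed
    define r where "r y = real_of_ereal (g y)" for y
    have gr: "g y = ereal (r y)" for y
      using g0[of y] gle[of y] unfolding r_def by (cases "g y") auto
    have r0: "r y \<ge> 0" for y using g0[of y] gr[of y] by simp
    have "ereal (sum r UNIV) = sum g UNIV" by (simp add: gr)
    then have "ereal (sum r UNIV) \<le> ereal 1" using S by (simp add: one_ereal_def)
    then have sr: "sum r UNIV \<le> 1" by (simp only: ereal_less_eq)
    define q where "q y = r y + (1 - sum r UNIV) / real CARD('y)" for y
    have q0: "q y \<ge> r y" for y using sr by (simp add: q_def)
    have "q \<in> Delta"
    proof -
      have "(\<Sum>y\<in>UNIV. q y) = sum r UNIV + real CARD('y) * ((1 - sum r UNIV) / real CARD('y))"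
        by (simp add: q_def sum.distrib)
      also have "\<dots> = 1" by simp
      finally show ?thesis unfolding Delta_def using q0 r0 by (auto intro: order_trans)
    qed
    moreover have "\<forall>y. ereal (q y) \<ge> g y" using q0 gr by simp
    ultimately show "\<exists>q\<in>Delta. \<forall>y. ereal (q y) \<ge> g y" by blast
  qed
  finally show ?thesis by (simp add: g_def)
qed
theorem corollary3:
  fixes \<alpha> \<beta> :: real
    and \<Phi> :: "'x::finite \<Rightarrow> 'y::finite \<Rightarrow> real^'m"
    and a b :: "real^'m"
  assumes alpha: "0 < \<alpha>" "\<alpha> \<noteq> 1"
    and beta: "\<beta> = \<alpha> / (\<alpha> - 1)"
  shows "P_feasible (alpha_score \<beta>) \<Phi> = Palpha_feasible \<beta> \<Phi>
     \<and> (\<forall>s. is_solution (mrc_obj a b) (P_feasible (alpha_score \<beta>) \<Phi>) s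
             \<longleftrightarrow> is_solution (mrc_obj a b) (Palpha_feasible \<beta> \<Phi>) s)
     \<and> (\<forall>\<mu> \<eta> \<nu> h. is_solution (mrc_obj a b) (Palpha_feasible \<beta> \<Phi>) (\<mu>, \<eta>, \<nu>)
          \<longrightarrow> classif_rule h
          \<longrightarrow> ((\<forall>x y. alpha_loss \<beta> h x y + ereal (\<Phi> x y \<bullet> \<mu> + \<nu>) \<le> 0)
               \<longleftrightarrow> (\<forall>x y. ereal (h x y) \<ge> epow (max 0 ((\<Phi> x y \<bullet> \<mu> + \<nu>) / \<beta> + 1)) \<beta>)))"
proof -
  have b: "\<beta> > 1 \<or> \<beta> < 0"
  proof (cases "\<alpha> > 1")
    case True
    then have "1 < \<alpha> / (\<alpha> - 1)" by (simp add: less_divide_eq)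
    then show ?thesis using beta by simp
  next
    case False
    then have "\<alpha> < 1" using alpha by simp
    then have "\<beta> < 0" using beta alpha by (simp add: divide_pos_neg)
    then show ?thesis by simp
  qed
  have F: "P_feasible (alpha_score \<beta>) \<Phi> = Palpha_feasible \<beta> \<Phi>"
    unfolding P_feasible_def Palpha_feasible_def using Lset_iff[OF b] by auto
  have H: "(\<forall>x y. alpha_loss \<beta> h x y + ereal (\<Phi> x y \<bullet> \<mu> + \<nu>) \<le> 0)
               \<longleftrightarrow> (\<forall>x y. ereal (h x y) \<ge> epow (max 0 ((\<Phi> x y \<bullet> \<mu> + \<nu>) / \<beta> + 1)) \<beta>)"
    if "classif_rule h" for h \<mu> \<nu>
  proof -
    have "0 \<le> h x y" for x y using that by (simp add: classif_rule_def Delta_def)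
    then show ?thesis unfolding alpha_loss_def alpha_score_def using key[OF b]
      by (simp add: add.commute)
  qed
  show ?thesis using F H by simp
qed

end
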